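(* For $\tau\in\mathbb{R}$, $$\mu_0(\tau;\tfrac13):=\int_{-\infty}^{\infty}\exp\left\{-\left(x^6-\tau x^4+\tfrac13\tau^2x^2\right)\right\}dx$$ is given by $$\mu_0(\tau;\tfrac13)=\left\{\tfrac13\Gamma\!\left(\tfrac16\right)\,{}_2F_2\!\left(\tfrac16,\tfrac12;\tfrac13,\tfrac23;\tfrac{\tau^3}{27}\right)+\tfrac13\tau\Gamma\!\left(\tfrac56\right){}_2F_2\!\left(\tfrac12,\tfrac56;\tfrac23,\tfrac43;\tfrac{\tau^3}{27}\right)-\frac{\tau^2\sqrt{\pi}}{36}\,{}_2F_2\!\left(\tfrac56,\tfrac76;\tfrac43,\tfrac53;\tfrac{\tau^3}{27}\right)\right\}\exp\left(-\frac{\tau^3}{27}\right).$$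
   Context: ${}_2F_2(a_1,a_2;b_1,b_2;z)$ denotes the generalised hypergeometric function with upper parameters $a_1,a_2$ and lower parameters $b_1,b_2$. *)

theory Defs
  imports "HOL-Analysis.Analysis"
begin

definition hyp2F2 :: "real \<Rightarrow> real \<Rightarrow> real \<Rightarrow> real \<Rightarrow> real \<Rightarrow> real" where
  "hyp2F2 a1 a2 b1 b2 z =
     (\<Sum>n. (pochhammer a1 n * pochhammer a2 n) / (pochhammer b1 n * pochhammer b2 n)
            * z ^ n / fact n)"

end

theory Submission
  imports Defs "HOL-Complex_Analysis.Complex_Analysis" "HOL-Computational_Algebra.Polynomial"
begin


fun Q :: "nat \<Rightarrow> 'a::idom poly" where
  "Q 0 = 1"
| "Q (Suc n) = pderiv (Q n) - smult 3 (pCons 0 (pCons 0 (Q n)))"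

lemma coeff_Q_of_real:
  "coeff (Q n :: complex poly) i = of_real (coeff (Q n :: real poly) i)"
proof (induction n arbitrary: i)
  case 0
  then show ?case by (simp add: coeff_1)
next
  case (Suc n)
  show ?case
    by (cases i; cases "i - 1") (simp_all add: coeff_pderiv coeff_pCons Suc.IH)
qed

lemma Q_of_real: "(Q n :: complex poly) = map_poly of_real (Q n)"
  by (rule poly_eqI) (simp add: coeff_map_poly coeff_Q_of_real)

lemma poly_Q_of_real: "poly (Q n :: complex poly) (of_real y) = of_real (poly (Q n) y)"
proof -
  have "poly (map_poly of_real p) (of_real y) = (of_real (poly p y) :: complex)" for p :: "real poly"
    by (induction p) (auto simp: map_poly_pCons)
  thus ?thesis by (simp add: Q_of_real)
qed

definition F :: "complex \<Rightarrow> complex" where "F z = exp (-(z^3))"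

lemma deriv_F: "(deriv ^^ n) F = (\<lambda>z. poly (Q n) z * exp (-(z^3)))"
proof (induction n)
  case 0
  then show ?case by (simp add: F_def fun_eq_iff)
next
  case (Suc n)
  have "deriv (\<lambda>z. poly (Q n) z * exp (-(z^3))) z = poly (Q (Suc n)) z * exp (-(z^3))" for z :: complex
  proof (rule DERIV_imp_deriv)
    show "((\<lambda>z. poly (Q n) z * exp (-(z^3))) has_field_derivative poly (Q (Suc n)) z * exp (-(z^3))) (at z)"
      by (rule derivative_eq_intros refl poly_DERIV | simp)+ (simp add: algebra_simps power2_eq_square power3_eq_cube)
  qed
  then show ?case by (simp add: Suc.IH del: Q.simps)
qed

lemma F_holo: "F holomorphic_on S"
  unfolding F_def by (intro holomorphic_intros)

lemma taylor_real:
  fixes y s :: real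
  shows "(\<lambda>n. poly (Q n) y * exp (-(y^3)) * (-s)^n / fact n) sums exp (-((y - s)^3))"
proof -
  have "(\<lambda>n. (deriv ^^ n) F (of_real y) / fact n * (of_real (y - s) - of_real y)^n) sums F (of_real (y - s))"
    by (rule holomorphic_power_series[OF F_holo[of "ball (of_real y) (\<bar>s\<bar>+1)"]]) (simp add: dist_norm)
  also have "(\<lambda>n. (deriv ^^ n) F (of_real y) / fact n * (of_real (y - s) - of_real y)^n) =
     (\<lambda>n. complex_of_real (poly (Q n) y * exp (-(y^3)) * (-s)^n / fact n))"
    by (simp add: deriv_F poly_Q_of_real fun_eq_iff exp_of_real[symmetric])
  also have "F (of_real (y - s)) = of_real (exp (-((y - s)^3)))"
    by (simp add: F_def exp_of_real[symmetric])
  finally show ?thesis by (simp only: sums_of_real_iff)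
qed

lemma Re_cube_bound:
  fixes y r :: real and x :: complex
  assumes "y \<ge> 0" "cmod (of_real y - x) = r"
  shows "Re (x^3) \<ge> y^3 - 3*y^2*r - 3*y*r^2 - r^3"
proof -
  define \<rho> where "\<rho> = x - of_real y"
  have nr: "cmod \<rho> = r" using assms(2) by (simp add: \<rho>_def norm_minus_commute)
  have x: "x = of_real y + \<rho>" by (simp add: \<rho>_def)
  have "x^3 = of_real (y^3) + of_real (3*y^2) * \<rho> + of_real (3*y) * \<rho>^2 + \<rho>^3"
    by (simp add: x algebra_simps power2_eq_square power3_eq_cube)
  hence re: "Re (x^3) = y^3 + 3*y^2 * Re \<rho> + 3*y * Re (\<rho>^2) + Re (\<rho>^3)"
    by simp
  have b1: "Re \<rho> \<ge> -r" using abs_Re_le_cmod[of \<rho>] nr by linarith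
  have b2: "Re (\<rho>^2) \<ge> -(r^2)" using abs_Re_le_cmod[of "\<rho>^2"] nr by (simp add: norm_power)
  have b3: "Re (\<rho>^3) \<ge> -(r^3)" using abs_Re_le_cmod[of "\<rho>^3"] nr by (simp add: norm_power)
  have "3*y^2 * Re \<rho> \<ge> 3*y^2 * (-r)" using b1 assms(1) by (intro mult_left_mono) auto
  moreover have "3*y * Re (\<rho>^2) \<ge> 3*y * (-(r^2))" using b2 assms(1) by (intro mult_left_mono) auto
  ultimately show ?thesis using re b3 by linarith
qed

lemma Q_bound:
  fixes y r :: real
  assumes "y \<ge> 0" "r > 0"
  shows "\<bar>poly (Q n) y\<bar> * exp (-(y^3)) \<le> fact n * exp (-(y^3) + 3*y^2*r + 3*y*r^2 + r^3) / r^n"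
proof -
  have "norm ((deriv ^^ n) F (of_real y)) \<le> fact n * exp (-(y^3) + 3*y^2*r + 3*y*r^2 + r^3) / r^n"
  proof (rule Cauchy_inequality)
    show "F holomorphic_on ball (complex_of_real y) r" by (rule F_holo)
    show "continuous_on (cball (complex_of_real y) r) F"
      by (rule holomorphic_on_imp_continuous_on, rule F_holo)
    show "cmod (F x) \<le> exp (-(y^3) + 3*y^2*r + 3*y*r^2 + r^3)"
      if "cmod (complex_of_real y - x) = r" for x
      using Re_cube_bound[OF assms(1) that] by (simp add: F_def norm_exp_eq_Re)
  qed (use assms in auto)
  moreover have "norm ((deriv ^^ n) F (of_real y)) = \<bar>poly (Q n) y\<bar> * exp (-(y^3))"
    by (simp add: deriv_F poly_Q_of_real exp_of_real[symmetric] norm_mult del: of_real_power)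
  ultimately show ?thesis by simp
qed



definition Lam :: "int \<Rightarrow> real" where "Lam k = Gamma (of_int (2*k+1) / 6) / 3"

lemma frac_not_int: "(of_int (2*k+1) / 6 :: real) \<notin> \<int>"
proof
  assume "(of_int (2*k+1) / 6 :: real) \<in> \<int>"
  then obtain n where "(of_int (2*k+1) / 6 :: real) = of_int n" by (auto elim: Ints_cases)
  hence "(of_int (2*k+1) :: real) = of_int (6*n)" by simp
  hence "2*k+1 = 6*n" by (simp only: of_int_eq_iff)
  thus False by presburger
qed

lemma frac_not_nonpos: "(of_int (2*k+1) / 6 :: real) \<notin> \<int>\<^sub>\<le>\<^sub>0"
  using frac_not_int nonpos_Ints_subset_Ints by blast

lemma Lam_rec: "3 * Lam (k+3) = (of_int k + 1/2) * Lam k"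
proof -
  have "Gamma (of_int (2*k+1) / 6 + 1) = (of_int (2*k+1) / 6) * Gamma (of_int (2*k+1) / 6 :: real)"
    by (rule Gamma_plus1[OF frac_not_nonpos])
  moreover have "(of_int (2*(k+3)+1) / 6 :: real) = of_int (2*k+1) / 6 + 1" by simp
  ultimately show ?thesis unfolding Lam_def by (simp add: field_simps)
qed

definition Lm :: "int \<Rightarrow> real poly \<Rightarrow> real" where
  "Lm m p = (\<Sum>j\<le>degree p. coeff p j * Lam (int j - m))"

lemma Lm_ext: "degree p \<le> N \<Longrightarrow> Lm m p = (\<Sum>j\<le>N. coeff p j * Lam (int j - m))"
  unfolding Lm_def
  by (rule sum.mono_neutral_left) (auto simp: coeff_eq_0)

lemma Lm_add: "Lm m (p + q) = Lm m p + Lm m q"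
proof -
  define N where "N = max (degree p) (degree q)"
  have "degree (p + q) \<le> N" unfolding N_def by (rule degree_add_le_max)
  thus ?thesis
    by (simp add: Lm_ext[of _ N] N_def sum.distrib algebra_simps)
qed

lemma Lm_diff: "Lm m (p - q) = Lm m p - Lm m q"
proof -
  define N where "N = max (degree p) (degree q)"
  have "degree (p - q) \<le> N" unfolding N_def by (rule degree_diff_le_max)
  thus ?thesis
    by (simp add: Lm_ext[of _ N] N_def sum_subtractf algebra_simps)
qed

lemma Lm_0: "Lm m 0 = 0" by (simp add: Lm_def)

lemma Lm_sum: "finite A \<Longrightarrow> Lm m (\<Sum>i\<in>A. f i) = (\<Sum>i\<in>A. Lm m (f i))"
  by (induction A rule: finite_induct) (simp_all add: Lm_add Lm_0)

lemma Lm_monom: "Lm m (monom c i) = c * Lam (int i - m)"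
proof -
  have "(\<Sum>j\<le>i. coeff (monom c i) j * Lam (int j - m)) = (\<Sum>j\<le>i. if j = i then c * Lam (int j - m) else 0)"
    by (rule sum.cong) (auto simp: coeff_monom)
  thus ?thesis by (subst Lm_ext[of _ i]) (simp_all add: degree_monom_le)
qed

lemma Lm_minus: "Lm m (- p) = - Lm m p"
  by (simp add: Lm_def sum_negf)

definition Dop :: "real poly \<Rightarrow> real poly" where
  "Dop p = pderiv p - smult 3 (pCons 0 (pCons 0 p))"

lemma Q_Suc_Dop: "Q (Suc n) = Dop (Q n)" by (simp add: Dop_def)

lemma Dop_add: "Dop (p + q) = Dop p + Dop q"
  by (simp add: Dop_def pderiv_add smult_add_right algebra_simps)

lemma Dop_0: "Dop 0 = 0" by (simp add: Dop_def)

lemma Dop_sum: "finite A \<Longrightarrow> Dop (\<Sum>i\<in>A. f i) = (\<Sum>i\<in>A. Dop (f i))"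
  by (induction A rule: finite_induct) (simp_all add: Dop_add Dop_0)

lemma Dop_monom: "Dop (monom c i) = monom (of_nat i * c) (i - 1) - monom (3*c) (i+2)"
  by (simp add: Dop_def pderiv_monom monom_Suc[symmetric] smult_monom)

lemma Lm_Dop_monom: "Lm m (Dop (monom c i)) = (of_int m + 1/2) * Lm (m+1) (monom c i)"
proof (cases i)
  case 0
  have "3 * Lam ((-1-m)+3) = (of_int (-1-m) + 1/2) * Lam (-1-m)" by (rule Lam_rec)
  moreover have "(-1-m)+3 = 2 - m" by simp
  ultimately have h: "3 * Lam (2 - m) = - ((of_int m + 1/2) * Lam (-1-m))" by (simp add: algebra_simps)
  have "Lm m (Dop (monom c i)) = - (c * (3 * Lam (2 - m)))" using 0
    by (simp add: Dop_monom Lm_diff Lm_monom Lm_minus)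
  also have "\<dots> = c * ((of_int m + 1/2) * Lam (-1-m))" by (simp only: h)
  also have "\<dots> = (of_int m + 1/2) * Lm (m+1) (monom c i)" using 0
    by (simp add: Lm_monom algebra_simps)
  finally show ?thesis .
next
  case (Suc j)
  have "3 * Lam ((int j - m)+3) = (of_int (int j - m) + 1/2) * Lam (int j - m)" by (rule Lam_rec)
  moreover have "(int j - m)+3 = int j + 3 - m" by simp
  moreover have "int (Suc j) - (m+1) = int j - m" by simp
  ultimately have h: "c * (3 * Lam (int j + 3 - m)) = c * ((of_int (int j - m) + 1/2) * Lam (int j - m))"
    by simp
  show ?thesis using Suc h
    by (simp add: Dop_monom Lm_diff Lm_monom Lm_minus algebra_simps)
qed

lemma Lm_Dop: "Lm m (Dop p) = (of_int m + 1/2) * Lm (m+1) p"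
proof -
  have "Lm m (Dop p) = Lm m (Dop (\<Sum>i\<le>degree p. monom (coeff p i) i))"
    by (simp only: poly_as_sum_of_monoms)
  also have "\<dots> = (\<Sum>i\<le>degree p. (of_int m + 1/2) * Lm (m+1) (monom (coeff p i) i))"
    by (simp add: Dop_sum Lm_sum Lm_Dop_monom)
  also have "\<dots> = (of_int m + 1/2) * Lm (m+1) (\<Sum>i\<le>degree p. monom (coeff p i) i)"
    by (simp add: Lm_sum sum_distrib_left)
  finally show ?thesis by (simp only: poly_as_sum_of_monoms)
qed

lemma Lm_Q: "Lm m (Q k) = pochhammer (of_int m + 1/2) k * Lam (-(m + int k))"
proof (induction k arbitrary: m)
  case 0
  then show ?case by (simp add: Lm_def)
next
  case (Suc k)
  have "Lm m (Q (Suc k)) = (of_int m + 1/2) * Lm (m+1) (Q k)"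
    by (simp only: Q_Suc_Dop Lm_Dop)
  also have "\<dots> = (of_int m + 1/2) * (pochhammer (of_int m + 1/2 + 1) k * Lam (-(m + int (Suc k))))"
    by (simp add: Suc.IH algebra_simps)
  also have "\<dots> = pochhammer (of_int m + 1/2) (Suc k) * Lam (-(m + int (Suc k)))"
    by (simp add: pochhammer_rec)
  finally show ?case .
qed



lemma moment_pointwise:
  fixes x :: real and i :: nat
  assumes "x \<noteq> 0"
  shows "\<bar>6 * x^5\<bar> * ((x^6) powr (real (2*i+1)/6 - 1) / exp (x^6)) = 6 * ((x^2)^i * exp (-((x^2)^3)))"
proof -
  have ax: "\<bar>x\<bar> > 0" using assms by simp
  have e6: "x^6 = \<bar>x\<bar> powr 6" using powr_realpow[OF ax, of 6] by simp
  have "(x^6) powr (real (2*i+1)/6 - 1) = \<bar>x\<bar> powr (6 * (real (2*i+1)/6 - 1))"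
    unfolding e6 by (rule powr_powr)
  also have "6 * (real (2*i+1)/6 - 1) = real (2*i) - 5" by simp
  finally have 1: "(x^6) powr (real (2*i+1)/6 - 1) = \<bar>x\<bar> powr (real (2*i) - 5)" .
  have "\<bar>x\<bar> powr (real (2*i) - 5) * \<bar>x\<bar> powr 5 = \<bar>x\<bar> powr (real (2*i) - 5 + 5)"
    by (rule powr_add[symmetric])
  also have "\<dots> = \<bar>x\<bar>^(2*i)" using powr_realpow[OF ax, of "2*i"] by simp
  finally have 2: "\<bar>x\<bar> powr (real (2*i) - 5) * \<bar>x\<bar>^5 = \<bar>x\<bar>^(2*i)"
    using powr_realpow[OF ax, of 5] by simp
  have 3: "\<bar>6 * x^5\<bar> = 6 * \<bar>x\<bar>^5" by (simp add: abs_mult power_abs)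
  have 4: "(x^2)^i = \<bar>x\<bar>^(2*i)" by (simp add: power_mult[symmetric] power_even_abs)
  have 5: "exp (-((x^2)^3)) = 1 / exp (x^6)" by (simp add: exp_minus power_mult[symmetric] inverse_eq_divide)
  have "\<bar>6 * x^5\<bar> * ((x^6) powr (real (2*i+1)/6 - 1) / exp (x^6))
      = 6 * (\<bar>x\<bar> powr (real (2*i) - 5) * \<bar>x\<bar>^5) / exp (x^6)"
    unfolding 1 3 by simp
  also have "\<dots> = 6 * ((x^2)^i * exp (-((x^2)^3)))"
    unfolding 2 4 5 by simp
  finally show ?thesis .
qed

lemma moment_half:
  fixes i :: nat and S :: "real set"
  assumes S: "S = {0..} \<or> S = {..0}"
  shows "((\<lambda>x. (x^2)^i * exp (-((x^2)^3))) has_integral Gamma (real (2*i+1)/6) / 6) S"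
proof -
  define a where "a = real (2*i+1)/6"
  have a: "a > 0" by (simp add: a_def)
  define f where "f t = t powr (a - 1) / exp t" for t :: real
  have G: "(f has_integral Gamma a) {0..}"
    unfolding f_def by (rule Gamma_integral_real[OF a])
  have Gabs: "f absolutely_integrable_on {0..}"
    by (rule nonnegative_absolutely_integrable_1) (use G in \<open>auto simp: f_def\<close>)
  have img: "(\<lambda>x::real. x^6) ` S = {0..}"
  proof
    show "(\<lambda>x::real. x^6) ` S \<subseteq> {0..}" by auto
    show "{0..} \<subseteq> (\<lambda>x::real. x^6) ` S"
    proof
      fix t :: real assume t: "t \<in> {0..}"
      show "t \<in> (\<lambda>x. x^6) ` S"
        using S
      proof
        assume "S = {0..}"
        thus ?thesis using t by (intro image_eqI[of _ _ "root 6 t"]) (auto simp: real_root_pow_pos2)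
      next
        assume "S = {..0}"
        thus ?thesis using t
          by (intro image_eqI[of _ _ "- root 6 t"]) (auto simp: real_root_pow_pos2)
      qed
    qed
  qed
  have inj: "inj_on (\<lambda>x::real. x^6) S"
    using S
  proof
    assume "S = {0..}"
    show ?thesis unfolding \<open>S = {0..}\<close>
    proof (rule inj_onI)
      fix x y :: real assume "x \<in> {0..}" "y \<in> {0..}" "x^6 = y^6"
      hence "x^6 = y^6" "x \<ge> 0" "y \<ge> 0" by auto
      from power_eq_imp_eq_base[OF this] show "x = y" by simp
    qed
  next
    assume SS: "S = {..0}"
    show ?thesis unfolding SS
    proof (rule inj_onI)
      fix x y :: real assume "x \<in> {..0}" "y \<in> {..0}" "x^6 = y^6"
      hence "(-x)^6 = (-y)^6" "-x \<ge> 0" "-y \<ge> 0" by auto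
      from power_eq_imp_eq_base[OF this] show "x = y" by simp
    qed
  qed
  have Sleb: "S \<in> sets lebesgue" using S by auto
  have der: "((\<lambda>x::real. x^6) has_field_derivative 6 * x^5) (at x within S)" for x
    by (rule DERIV_subset[of _ _ _ UNIV]) (auto intro!: derivative_eq_intros)
  have cv: "(\<lambda>x. \<bar>6 * x^5\<bar> * f (x^6)) absolutely_integrable_on S \<and>
            integral S (\<lambda>x. \<bar>6 * x^5\<bar> * f (x^6)) = Gamma a"
    using has_absolute_integral_change_of_variables_1'[OF Sleb der inj, of f "Gamma a"]
    using Gabs G img by (simp add: integral_unique)
  hence "((\<lambda>x. \<bar>6 * x^5\<bar> * f (x^6)) has_integral Gamma a) S"
    using set_lebesgue_integral_eq_integral(1) has_integral_integral
    by (metis absolutely_integrable_on_def)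
  hence "((\<lambda>x. 6 * ((x^2)^i * exp (-((x^2)^3)))) has_integral Gamma a) S"
  proof (rule has_integral_spike[OF negligible_sing[of 0], rotated])
    fix x assume "x \<in> S - {0}"
    hence "x \<noteq> 0" by simp
    from moment_pointwise[OF this, of i]
    show "6 * ((x^2)^i * exp (-((x^2)^3))) = \<bar>6 * x^5\<bar> * f (x^6)"
      by (simp add: f_def a_def)
  qed
  hence "((\<lambda>x. (1/6) * (6 * ((x^2)^i * exp (-((x^2)^3))))) has_integral (1/6) * Gamma a) S"
    by (rule has_integral_mult_right)
  thus ?thesis by (simp add: a_def)
qed

lemma moment:
  fixes i :: nat
  shows "integrable lborel (\<lambda>x::real. (x^2)^i * exp (-((x^2)^3)))"
    and "(LBINT x. (x^2)^i * exp (-((x^2)^3))) = Lam (int i)"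
proof -
  have "((\<lambda>x::real. (x^2)^i * exp (-((x^2)^3))) has_integral
          (Gamma (real (2*i+1)/6) / 6 + Gamma (real (2*i+1)/6) / 6)) ({..0} \<union> {0..})"
  proof (rule has_integral_Un[OF moment_half moment_half])
    have "{..0} \<inter> {0..} = {0::real}" by auto
    thus "negligible ({..0::real} \<inter> {0..})" by simp
  qed auto
  moreover have "{..0} \<union> {0..} = (UNIV :: real set)" by auto
  moreover have "Gamma (real (2*i+1)/6) / 6 + Gamma (real (2*i+1)/6) / 6 = Lam (int i)"
    by (simp add: Lam_def add.commute)
  ultimately have I: "((\<lambda>x::real. (x^2)^i * exp (-((x^2)^3))) has_integral Lam (int i)) UNIV"
    by simp
  have Lnn: "Lam (int i) \<ge> 0" unfolding Lam_def by (intro divide_nonneg_nonneg Gamma_real_nonneg) auto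
  have meas: "(\<lambda>x::real. (x^2)^i * exp (-((x^2)^3))) \<in> borel_measurable borel" by measurable
  have meas2: "(\<lambda>x::real. (x^2)^i * exp (-((x^2)^3))) \<in> borel_measurable lborel" by measurable
  have "integral\<^sup>N lborel (\<lambda>x::real. (x^2)^i * exp (-((x^2)^3))) = Lam (int i)"
    by (rule nn_integral_has_integral_lborel[OF meas _ I]) simp
  hence "integrable lborel (\<lambda>x::real. (x^2)^i * exp (-((x^2)^3))) \<and>
         (LBINT x. (x^2)^i * exp (-((x^2)^3))) = Lam (int i)"
    using nn_integral_eq_integrable[where M=lborel, OF meas2 _ Lnn] by simp
  thus "integrable lborel (\<lambda>x::real. (x^2)^i * exp (-((x^2)^3)))"
    and "(LBINT x. (x^2)^i * exp (-((x^2)^3))) = Lam (int i)" by auto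
qed



lemma cubic_ineq:
  fixes y r :: real
  assumes y: "y \<ge> 0" and r: "r > 0"
  shows "-(y^3) + 3*y^2*r + 3*y*r^2 + r^3 \<le> 469*r^3 - y^3/2"
proof (cases "y \<le> 12*r")
  case True
  have "y^2 \<le> (12*r)^2" using True y by (intro power_mono) auto
  hence a: "y^2*r \<le> 144*r^3" using r by (simp add: power2_eq_square power3_eq_cube mult_right_mono)
  have "y*r^2 \<le> (12*r)*r^2" using True r by (intro mult_right_mono) auto
  hence b: "y*r^2 \<le> 12*r^3" by (simp add: power2_eq_square power3_eq_cube)
  have "y^3 \<ge> 0" using y by simp
  thus ?thesis using a b by linarith
next
  case False
  have "y^3 = y * y^2" by (simp add: power2_eq_square power3_eq_cube)
  also have "\<dots> \<ge> (12*r) * y^2" using False by (intro mult_right_mono) auto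
  finally have a: "y^3 \<ge> 12*r*y^2" .
  have "r*y^2 = (r*y)*y" by (simp add: power2_eq_square)
  also have "\<dots> \<ge> (r*y)*(12*r)" using False r y by (intro mult_left_mono) auto
  finally have b: "r*y^2 \<ge> 12*y*r^2" by (simp add: power2_eq_square algebra_simps)
  have "r^3 \<ge> 0" using r by simp
  have a': "r*y^2 \<le> y^3/12" using a by simp
  have b': "y*r^2 \<le> (r*y^2)/12" using b by simp
  have e: "3*y^2*r = 3*(r*y^2)" "3*y*r^2 = 3*(y*r^2)" by simp_all
  have "y^3 \<ge> 0" using y by simp
  show ?thesis unfolding e using a' b' \<open>r^3 \<ge> 0\<close> \<open>y^3 \<ge> 0\<close> by linarith
qed

lemma poly_moment:
  fixes p :: "real poly"
  shows "integrable lborel (\<lambda>x::real. poly p (x^2) * exp (-((x^2)^3)))"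
    and "(LBINT x. poly p (x^2) * exp (-((x^2)^3))) = Lm 0 p"
proof -
  have eq: "(\<lambda>x::real. poly p (x^2) * exp (-((x^2)^3))) =
      (\<lambda>x. \<Sum>j\<le>degree p. coeff p j * ((x^2)^j * exp (-((x^2)^3))))"
  proof (rule ext)
    fix x :: real
    have "poly p (x^2) = (\<Sum>j\<le>degree p. coeff p j * (x^2)^j)" by (rule poly_altdef)
    thus "poly p (x^2) * exp (-((x^2)^3)) = (\<Sum>j\<le>degree p. coeff p j * ((x^2)^j * exp (-((x^2)^3))))"
      by (simp add: sum_distrib_right mult.assoc)
  qed
  show "integrable lborel (\<lambda>x::real. poly p (x^2) * exp (-((x^2)^3)))"
    unfolding eq by (intro Bochner_Integration.integrable_sum integrable_mult_right moment(1))
  show "(LBINT x. poly p (x^2) * exp (-((x^2)^3))) = Lm 0 p"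
  proof -
    have m1: "integrable lborel (\<lambda>x::real. (x^2)^i * exp (-(x^6)))" for i
      using moment(1)[of i] by simp
    have m2: "(LBINT x::real. (x^2)^i * exp (-(x^6))) = Lam (int i)" for i
      using moment(2)[of i] by simp
    show ?thesis unfolding eq
      by (subst Bochner_Integration.integral_sum) (auto intro!: integrable_mult_right m1 simp: m2 Lm_def)
  qed
qed

lemma gauss6_integrable: "integrable lborel (\<lambda>x::real. exp (-((x^2)^3) / 2))"
proof -
  define c :: real where "c = root 6 (1/2)"
  have c6: "c^6 = 1/2" unfolding c_def by (simp add: real_root_pow_pos2)
  have m0: "integrable lborel (\<lambda>x::real. exp (-((x^2)^3)))"
    using moment(1)[of 0] by simp
  have "integrable lborel (\<lambda>x::real. exp (-(((0 + c * x)^2)^3)))"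
    by (rule lborel_integrable_real_affine[OF m0, of c 0]) (simp add: c_def)
  moreover have "(\<lambda>x::real. exp (-(((0 + c * x)^2)^3))) = (\<lambda>x. exp (-((x^2)^3) / 2))"
  proof (rule ext)
    fix x :: real
    have "((0 + c * x)^2)^3 = c^6 * (x^2)^3" by (simp add: power_mult_distrib power_mult[symmetric])
    thus "exp (-(((0 + c * x)^2)^3)) = exp (-((x^2)^3) / 2)" using c6 by simp
  qed
  ultimately show ?thesis by simp
qed



lemma series_integral:
  fixes s :: real
  obtains C where "(\<lambda>n. (-s)^n / fact n * (pochhammer (1/2) n * Lam (- int n))) sums (LBINT x. exp (-((x^2 - s)^3)))"
   and "\<And>n. \<bar>(-s)^n / fact n * (pochhammer (1/2) n * Lam (- int n))\<bar> \<le> C * (1/2)^n"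
proof -
  define r where "r = 2*\<bar>s\<bar>+1"
  have r: "r > 0" by (simp add: r_def add_nonneg_pos)
  have sr: "\<bar>s\<bar> / r \<le> 1/2" using r by (simp add: r_def field_simps)
  define E where "E x = exp (-((x^2)^3) + 3*(x^2)^2*r + 3*(x^2)*r^2 + r^3)" for x :: real
  define f where "f n x = poly (Q n) (x^2) * exp (-((x^2)^3)) * (-s)^n / fact n" for n x
  have E_nonneg: "E x \<ge> 0" for x by (simp add: E_def)
  have Eint: "integrable lborel E"
  proof (rule Bochner_Integration.integrable_bound[OF integrable_mult_right[OF gauss6_integrable, of "exp (469*r^3)"]])
    show "E \<in> borel_measurable lborel" unfolding E_def by measurable
    show "AE x in lborel. norm (E x) \<le> norm (exp (469*r^3) * exp (-((x^2)^3) / 2))"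
    proof (rule AE_I2)
      fix x :: real
      have "E x \<le> exp (469*r^3 - (x^2)^3/2)"
        unfolding E_def using cubic_ineq[of "x^2" r] r by simp
      also have "\<dots> = exp (469*r^3) * exp (-((x^2)^3) / 2)"
        by (simp add: exp_add[symmetric])
      finally show "norm (E x) \<le> norm (exp (469*r^3) * exp (-((x^2)^3) / 2))"
        using E_nonneg[of x] by simp
    qed
  qed
  have fbound: "\<bar>f n x\<bar> \<le> E x * (1/2)^n" for n x
  proof -
    have Qb: "\<bar>poly (Q n) (x^2)\<bar> * exp (-((x^2)^3)) \<le> fact n * E x / r^n"
      using Q_bound[of "x^2" r n] r unfolding E_def by simp
    have "\<bar>f n x\<bar> = (\<bar>poly (Q n) (x^2)\<bar> * exp (-((x^2)^3))) * (\<bar>s\<bar>^n / fact n)"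
      by (simp add: f_def abs_mult power_abs)
    also have "\<dots> \<le> (fact n * E x / r^n) * (\<bar>s\<bar>^n / fact n)"
      by (rule mult_right_mono[OF Qb]) simp
    also have "\<dots> = E x * (\<bar>s\<bar> / r)^n"
      by (simp add: power_divide)
    also have "\<dots> \<le> E x * (1/2)^n"
      by (intro mult_left_mono power_mono sr E_nonneg) (use r in simp_all)
    finally show ?thesis .
  qed
  have fint: "integrable lborel (f n)" for n
  proof -
    have e: "f n = (\<lambda>x. ((-s)^n / fact n) * (poly (Q n) (x^2) * exp (-((x^2)^3))))"
      by (simp add: f_def fun_eq_iff)
    show ?thesis unfolding e by (rule integrable_mult_right[OF poly_moment(1)])
  qed
  have fval: "(LBINT x. f n x) = (-s)^n / fact n * (pochhammer (1/2) n * Lam (- int n))" for n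
  proof -
    have e: "f n = (\<lambda>x. ((-s)^n / fact n) * (poly (Q n) (x^2) * exp (-((x^2)^3))))"
      by (simp add: f_def fun_eq_iff)
    have "(LBINT x. f n x) = ((-s)^n / fact n) * Lm 0 (Q n)"
      unfolding e integral_mult_right_zero poly_moment(2) ..
    thus ?thesis by (simp add: Lm_Q)
  qed
  define C where "C = (LBINT x. E x)"
  have intnorm: "(LBINT x. norm (f n x)) \<le> C * (1/2)^n" for n
  proof -
    have "(LBINT x. norm (f n x)) \<le> (LBINT x. E x * (1/2)^n)"
      by (rule integral_mono) (use fint Eint fbound in auto)
    thus ?thesis by (simp add: C_def)
  qed
  have summ_int: "summable (\<lambda>n. (LBINT x. norm (f n x)))"
  proof (rule summable_comparison_test'[of "\<lambda>n. C * (1/2)^n" 0])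
    show "summable (\<lambda>n. C * (1/2::real)^n)" by (intro summable_mult summable_geometric) simp
    show "norm (LBINT x. norm (f n x)) \<le> C * (1/2)^n" for n
      using intnorm[of n] by (simp add: integral_nonneg_AE)
  qed
  have summ_pt: "AE x in lborel. summable (\<lambda>n. norm (f n x))"
  proof (rule AE_I2)
    fix x
    show "summable (\<lambda>n. norm (f n x))"
    proof (rule summable_comparison_test'[of "\<lambda>n. E x * (1/2)^n" 0])
      show "summable (\<lambda>n. E x * (1/2::real)^n)" by (intro summable_mult summable_geometric) simp
      show "norm (norm (f n x)) \<le> E x * (1/2)^n" for n using fbound[of n x] by simp
    qed
  qed
  have S: "(\<lambda>n. LBINT x. f n x) sums (LBINT x. (\<Sum>n. f n x))"
    by (rule sums_integral[OF fint summ_pt summ_int])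
  have "(\<lambda>x. \<Sum>n. f n x) = (\<lambda>x. exp (-((x^2 - s)^3)))"
  proof (rule ext)
    fix x :: real
    show "(\<Sum>n. f n x) = exp (-((x^2 - s)^3))"
      unfolding f_def by (rule sums_unique[symmetric, OF taylor_real])
  qed
  with S have S': "(\<lambda>n. (-s)^n / fact n * (pochhammer (1/2) n * Lam (- int n))) sums (LBINT x. exp (-((x^2 - s)^3)))"
    by (simp add: fval)
  have B: "\<bar>(-s)^n / fact n * (pochhammer (1/2) n * Lam (- int n))\<bar> \<le> C * (1/2)^n" for n
  proof -
    have "\<bar>(-s)^n / fact n * (pochhammer (1/2) n * Lam (- int n))\<bar> = \<bar>LBINT x. f n x\<bar>"
      by (simp add: fval)
    also have "\<dots> \<le> (LBINT x. norm (f n x))" using integral_norm_bound[of lborel "f n"] by simp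
    also have "\<dots> \<le> C * (1/2)^n" by (rule intnorm)
    finally show ?thesis .
  qed
  show ?thesis by (rule that[OF S' B])
qed



lemma poch3: "pochhammer (a::real) (3*m) = 27^m * pochhammer (a/3) m * pochhammer ((a+1)/3) m * pochhammer ((a+2)/3) m"
proof (induction m)
  case 0 then show ?case by simp
next
  case (Suc m)
  have e: "3 * Suc m = Suc (Suc (Suc (3*m)))" by simp
  show ?case unfolding e pochhammer_Suc Suc.IH
    by (simp add: pochhammer_Suc field_simps)
qed

lemma Gshift:
  fixes c :: real
  assumes c: "c \<notin> \<int>"
  shows "Gamma (c - of_nat m) * pochhammer (1 - c) m = (-1)^m * Gamma c"
proof (induction m)
  case 0 then show ?case by simp
next
  case (Suc m)
  have nz: "c - of_nat m - 1 \<notin> \<int>\<^sub>\<le>\<^sub>0"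
  proof
    assume "c - of_nat m - 1 \<in> \<int>\<^sub>\<le>\<^sub>0"
    hence "c - of_nat m - 1 \<in> \<int>" using nonpos_Ints_subset_Ints by blast
    hence "c - of_nat m - 1 + (of_nat m + 1) \<in> \<int>" by (intro Ints_add) auto
    thus False using c by simp
  qed
  have g: "Gamma (c - of_nat m) = (c - of_nat m - 1) * Gamma (c - of_nat m - 1)"
    using Gamma_plus1[OF nz] by simp
  have "Gamma (c - of_nat (Suc m)) * pochhammer (1 - c) (Suc m)
      = - (((c - of_nat m - 1) * Gamma (c - of_nat m - 1)) * pochhammer (1 - c) m)"
    by (simp add: pochhammer_Suc algebra_simps)
  also have "\<dots> = - (Gamma (c - of_nat m) * pochhammer (1 - c) m)" by (simp only: g)
  also have "\<dots> = (-1)^(Suc m) * Gamma c" by (simp add: Suc.IH)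
  finally show ?case .
qed

lemma ni16: "(1/6::real) \<notin> \<int>" using frac_not_int[of 0] by simp
lemma nim16: "(-1/6::real) \<notin> \<int>" using frac_not_int[of "-1"] by simp
lemma nim12: "(-1/2::real) \<notin> \<int>" using frac_not_int[of "-2"] by simp

lemma G_m16: "Gamma (-1/6::real) = -6 * Gamma (5/6)"
proof -
  have "Gamma (-1/6 + 1) = (-1/6) * Gamma (-1/6::real)"
    by (rule Gamma_plus1) (use nim16 nonpos_Ints_subset_Ints in blast)
  thus ?thesis by simp
qed

lemma G_m12: "Gamma (-1/2::real) = -2 * sqrt pi"
proof -
  have "Gamma (-1/2 + 1) = (-1/2) * Gamma (-1/2::real)"
    by (rule Gamma_plus1) (use nim12 nonpos_Ints_subset_Ints in blast)
  thus ?thesis using Gamma_one_half_real by simp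
qed

definition bt :: "real \<Rightarrow> nat \<Rightarrow> real" where
  "bt s n = (-s)^n / fact n * (pochhammer (1/2) n * Lam (- int n))"

definition Tm :: "real \<Rightarrow> real \<Rightarrow> real \<Rightarrow> real \<Rightarrow> real \<Rightarrow> nat \<Rightarrow> real" where
  "Tm a1 a2 b1 b2 z n = (pochhammer a1 n * pochhammer a2 n) / (pochhammer b1 n * pochhammer b2 n) * z ^ n / fact n"

lemma pos_poch: "a > 0 \<Longrightarrow> pochhammer (a::real) m > 0" by (rule pochhammer_pos)

lemma alg0:
  fixes e Z K A B F P1 P2 D G :: real
  assumes "A \<noteq> 0" "B \<noteq> 0" "D \<noteq> 0" "F \<noteq> 0" "K \<noteq> 0" "e*e = 1"
  shows "e * Z / (K * A * B * F) * (K * P1 * P2 * D * (e * G / D / 3)) = 1/3 * G * (P1 * P2 / (A * B) * Z / F)"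
proof -
  have "e * Z / (K * A * B * F) * (K * P1 * P2 * D * (e * G / D / 3)) = (e*e) * (Z * P1 * P2 * G / (3 * A * B * F))"
    using assms by (simp add: field_simps)
  also have "\<dots> = 1/3 * G * (P1 * P2 / (A * B) * Z / F)" using assms by (simp add: field_simps)
  finally show ?thesis .
qed

lemma alg1:
  fixes e Z K A B F P1 P2 D G s :: real
  assumes "A \<noteq> 0" "B \<noteq> 0" "D \<noteq> 0" "F \<noteq> 0" "K \<noteq> 0" "e*e = 1"
  shows "e * Z * (-s) / (K * A * F * B) * (1/2 * (K * P1 * P2 * D) * (e * (-6 * G) / D / 3)) = s * G * (P1 * P2 / (A * B) * Z / F)"
proof -
  have "e * Z * (-s) / (K * A * F * B) * (1/2 * (K * P1 * P2 * D) * (e * (-6 * G) / D / 3)) = (e*e) * (s * G * (P1 * P2 / (A * B) * Z / F))"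
    using assms by (simp add: field_simps)
  thus ?thesis using assms by simp
qed

lemma alg2:
  fixes e Z K B C F P1 P2 D G s :: real
  assumes "B \<noteq> 0" "C \<noteq> 0" "D \<noteq> 0" "F \<noteq> 0" "K \<noteq> 0" "e*e = 1"
  shows "e * Z * s^2 / (2 * (K * F * B * C)) * (3/4 * (K * P1 * P2 * D) * (e * (-2 * G) / D / 3)) = -(s^2 * G / 4) * (P1 * P2 / (B * C) * Z / F)"
proof -
  have "e * Z * s^2 / (2 * (K * F * B * C)) * (3/4 * (K * P1 * P2 * D) * (e * (-2 * G) / D / 3)) = (e*e) * (-(s^2 * G / 4) * (P1 * P2 / (B * C) * Z / F))"
    using assms by (simp add: field_simps)
  thus ?thesis using assms by simp
qed

lemma bt0: "bt s (3*m) = (1/3) * Gamma (1/6) * Tm (1/6) (1/2) (1/3) (2/3) (s^3) m"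
proof -
  have P: "pochhammer (1/2::real) (3*m) = 27^m * pochhammer (1/6) m * pochhammer (1/2) m * pochhammer (5/6) m"
    using poch3[of "1/2" m] by simp
  have Fa: "fact (3*m) = 27^m * pochhammer (1/3::real) m * pochhammer (2/3) m * fact m"
    using poch3[of 1 m] by (simp add: pochhammer_fact)
  have L: "Lam (- int (3*m)) = Gamma (1/6 - of_nat m) / 3"
  proof -
    have "(of_int (2 * (- int (3*m)) + 1) / 6 :: real) = 1/6 - of_nat m" by simp
    thus ?thesis by (simp only: Lam_def)
  qed
  have G: "Gamma (1/6 - of_nat m :: real) = (-1)^m * Gamma (1/6) / pochhammer (5/6) m"
  proof -
    have "Gamma (1/6 - of_nat m :: real) * pochhammer (1 - 1/6) m = (-1)^m * Gamma (1/6)"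
      by (rule Gshift[OF ni16])
    moreover have "pochhammer (5/6::real) m \<noteq> 0" using pos_poch[of "5/6" m] by simp
    ultimately show ?thesis by (simp add: eq_divide_eq)
  qed
  have S: "(-s)^(3*m) = (-1)^m * (s^3)^m"
  proof -
    have "(-s)^(3*m) = ((-s)^3)^m" by (rule power_mult)
    also have "(-s)^3 = (-1) * s^3" by simp
    also have "((-1) * s^3)^m = (-1)^m * (s^3)^m" by (rule power_mult_distrib)
    finally show ?thesis .
  qed
  have nz: "pochhammer (1/3::real) m > 0" "pochhammer (2/3::real) m > 0" "pochhammer (5/6::real) m > 0"
    by (simp_all add: pos_poch)
  show ?thesis
    unfolding bt_def Tm_def P Fa L G S
    by (rule alg0) (use nz in \<open>simp_all flip: power_mult_distrib\<close>)
qed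

lemma bt1: "bt s (3*m+1) = s * Gamma (5/6) * Tm (1/2) (5/6) (2/3) (4/3) (s^3) m"
proof -
  have P: "pochhammer (1/2::real) (3*m+1) = 1/2 * (27^m * pochhammer (1/2) m * pochhammer (5/6) m * pochhammer (7/6) m)"
    using poch3[of "3/2" m] by (simp add: pochhammer_rec)
  have Fa: "fact (3*m+1) = 27^m * pochhammer (2/3::real) m * fact m * pochhammer (4/3) m"
    using poch3[of 2 m] by (simp add: pochhammer_fact pochhammer_rec)
  have L: "Lam (- int (3*m+1)) = Gamma (-1/6 - of_nat m) / 3"
  proof -
    have "(of_int (2 * (- int (3*m+1)) + 1) / 6 :: real) = -1/6 - of_nat m" by simp
    thus ?thesis by (simp only: Lam_def)
  qed
  have G: "Gamma (-1/6 - of_nat m :: real) = (-1)^m * (-6 * Gamma (5/6)) / pochhammer (7/6) m"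
  proof -
    have "Gamma (-1/6 - of_nat m :: real) * pochhammer (1 - (-1/6)) m = (-1)^m * Gamma (-1/6)"
      by (rule Gshift[OF nim16])
    moreover have "pochhammer (7/6::real) m \<noteq> 0" using pos_poch[of "7/6" m] by simp
    moreover have g: "Gamma (-(1/6)::real) = -6 * Gamma (5/6)" using G_m16 by simp
    ultimately show ?thesis by (simp add: field_simps)
  qed
  have S: "(-s)^(3*m+1) = (-1)^m * (s^3)^m * (-s)"
  proof -
    have "(-s)^(3*m) = ((-s)^3)^m" by (rule power_mult)
    also have "(-s)^3 = (-1) * s^3" by simp
    also have "((-1) * s^3)^m = (-1)^m * (s^3)^m" by (rule power_mult_distrib)
    finally show ?thesis by simp
  qed
  have nz: "pochhammer (2/3::real) m > 0" "pochhammer (4/3::real) m > 0" "pochhammer (7/6::real) m > 0"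
    by (simp_all add: pos_poch)
  show ?thesis
    unfolding bt_def Tm_def P Fa L G S
    by (rule alg1) (use nz in \<open>simp_all flip: power_mult_distrib\<close>)
qed

lemma bt2: "bt s (3*m+2) = -(s^2 * sqrt pi / 4) * Tm (5/6) (7/6) (4/3) (5/3) (s^3) m"
proof -
  have P: "pochhammer (1/2::real) (3*m+2) = 3/4 * (27^m * pochhammer (5/6) m * pochhammer (7/6) m * pochhammer (3/2) m)"
    using poch3[of "5/2" m] by (simp add: pochhammer_rec numeral_2_eq_2)
  have Fa: "fact (3*m+2) = 2 * (27^m * fact m * pochhammer (4/3::real) m * pochhammer (5/3) m)"
    using poch3[of 3 m] by (simp add: pochhammer_fact pochhammer_rec numeral_2_eq_2)
  have L: "Lam (- int (3*m+2)) = Gamma (-1/2 - of_nat m) / 3"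
  proof -
    have "(of_int (2 * (- int (3*m+2)) + 1) / 6 :: real) = -1/2 - of_nat m" by simp
    thus ?thesis by (simp only: Lam_def)
  qed
  have G: "Gamma (-1/2 - of_nat m :: real) = (-1)^m * (-2 * sqrt pi) / pochhammer (3/2) m"
  proof -
    have "Gamma (-1/2 - of_nat m :: real) * pochhammer (1 - (-1/2)) m = (-1)^m * Gamma (-1/2)"
      by (rule Gshift[OF nim12])
    moreover have "pochhammer (3/2::real) m \<noteq> 0" using pos_poch[of "3/2" m] by simp
    moreover have g: "Gamma (-(1/2)::real) = -2 * sqrt pi" using G_m12 by simp
    ultimately show ?thesis by (simp add: field_simps)
  qed
  have S: "(-s)^(3*m+2) = (-1)^m * (s^3)^m * s^2"
  proof -
    have "(-s)^(3*m) = ((-s)^3)^m" by (rule power_mult)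
    also have "(-s)^3 = (-1) * s^3" by simp
    also have "((-1) * s^3)^m = (-1)^m * (s^3)^m" by (rule power_mult_distrib)
    finally have "(-s)^(3*m) = (-1)^m * (s^3)^m" .
    moreover have "(-s)^(3*m+2) = (-s)^(3*m) * s^2" by (simp add: power_add power2_eq_square)
    ultimately show ?thesis by simp
  qed
  have nz: "pochhammer (4/3::real) m > 0" "pochhammer (5/3::real) m > 0" "pochhammer (3/2::real) m > 0"
    by (simp_all add: pos_poch)
  show ?thesis
    unfolding bt_def Tm_def P Fa L G S
    by (rule alg2) (use nz in \<open>simp_all flip: power_mult_distrib\<close>)
qed



lemma hyp_Tm: "hyp2F2 a1 a2 b1 b2 z = suminf (Tm a1 a2 b1 b2 z)"
  unfolding hyp2F2_def by (rule arg_cong[where f=suminf], rule ext, simp only: Tm_def)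

lemma suminf_cmult':
  fixes c :: real
  assumes "summable (\<lambda>n. c * f n)"
  shows "(\<Sum>n. c * f n) = c * suminf f"
proof (cases "c = 0")
  case True then show ?thesis by simp
next
  case False
  hence "summable f" using assms summable_cmult_iff by blast
  thus ?thesis by (rule suminf_mult)
qed

lemma sum3:
  fixes f :: "nat \<Rightarrow> real" and m :: nat
  shows "sum f {m*3..<m*3+3} = f (3*m) + f (3*m+1) + f (3*m+2)"
  by (simp add: numeral_3_eq_3 mult.commute add.assoc)

lemma integrand_eq:
  fixes x \<tau> :: real
  shows "exp (- (x ^ 6 - \<tau> * x ^ 4 + (1/3) * \<tau>\<^sup>2 * x\<^sup>2)) = exp (-((\<tau>/3)^3)) * exp (-((x^2 - \<tau>/3)^3))"
proof -
  have "x ^ 6 - \<tau> * x ^ 4 + (1/3) * \<tau>\<^sup>2 * x\<^sup>2 = (\<tau>/3)^3 + (x^2 - \<tau>/3)^3"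
    by (simp add: field_simps power2_eq_square power3_eq_cube eval_nat_numeral)
  thus ?thesis by (simp add: exp_add[symmetric])
qed

theorem lemma6p2:
  fixes \<tau> :: real
  shows "(LBINT x. exp (- (x ^ 6 - \<tau> * x ^ 4 + (1/3) * \<tau>\<^sup>2 * x\<^sup>2))) =
    ((1/3) * Gamma (1/6) * hyp2F2 (1/6) (1/2) (1/3) (2/3) (\<tau> ^ 3 / 27)
     + (1/3) * \<tau> * Gamma (5/6) * hyp2F2 (1/2) (5/6) (2/3) (4/3) (\<tau> ^ 3 / 27)
     - \<tau>\<^sup>2 * sqrt pi / 36 * hyp2F2 (5/6) (7/6) (4/3) (5/3) (\<tau> ^ 3 / 27))
    * exp (- (\<tau> ^ 3 / 27))"
proof -
  define s where "s = \<tau>/3"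
  have tau: "\<tau> = 3 * s" by (simp add: s_def)
  have z: "\<tau>^3/27 = s^3" by (simp add: tau power_mult_distrib)
  define J where "J = (LBINT x. exp (-((x^2 - s)^3)))"
  obtain C where S0: "(\<lambda>n. (-s)^n / fact n * (pochhammer (1/2) n * Lam (- int n))) sums J"
    and B0: "\<And>n. \<bar>(-s)^n / fact n * (pochhammer (1/2) n * Lam (- int n))\<bar> \<le> C * (1/2)^n"
    using series_integral[of s] unfolding J_def by blast
  have S: "(\<lambda>n. bt s n) sums J" unfolding bt_def by (rule S0)
  have Bd: "\<bar>bt s n\<bar> \<le> C * (1/2)^n" for n unfolding bt_def by (rule B0)
  have "\<bar>bt s 0\<bar> \<le> C" using Bd[of 0] by simp
  hence C0: "C \<ge> 0" by (meson abs_ge_zero order_trans)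
  have sub: "\<bar>bt s (3*m+i)\<bar> \<le> C * (1/2)^m" for m i
  proof -
    have "(1/2::real)^(3*m+i) \<le> (1/2)^m" by (rule power_decreasing) auto
    thus ?thesis using Bd[of "3*m+i"] C0 by (meson mult_left_mono order_trans)
  qed
  have sumi: "summable (\<lambda>m. bt s (3*m+i))" for i
    by (rule summable_comparison_test'[of "\<lambda>m. C * (1/2)^m" 0])
       (use sub in \<open>auto intro!: summable_mult summable_geometric\<close>)
  have sum0: "summable (\<lambda>m. bt s (3*m))" using sumi[of 0] by simp
  have G1: "(\<lambda>m. bt s (3*m) + bt s (3*m+1) + bt s (3*m+2)) sums J"
    using sums_group[OF S, of 3] by (simp add: sum3)
  have "J = (\<Sum>m. bt s (3*m) + bt s (3*m+1) + bt s (3*m+2))"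
    using G1 by (simp add: sums_iff)
  also have "\<dots> = (\<Sum>m. bt s (3*m)) + (\<Sum>m. bt s (3*m+1)) + (\<Sum>m. bt s (3*m+2))"
    using sum0 sumi[of 1] sumi[of 2] by (simp add: suminf_add summable_add)
  also have "(\<Sum>m. bt s (3*m)) = (1/3) * Gamma (1/6) * hyp2F2 (1/6) (1/2) (1/3) (2/3) (s^3)"
    using sum0 unfolding bt0 hyp_Tm by (rule suminf_cmult')
  also have "(\<Sum>m. bt s (3*m+1)) = s * Gamma (5/6) * hyp2F2 (1/2) (5/6) (2/3) (4/3) (s^3)"
    using sumi[of 1] unfolding bt1 hyp_Tm by (rule suminf_cmult')
  also have "(\<Sum>m. bt s (3*m+2)) = -(s^2 * sqrt pi / 4) * hyp2F2 (5/6) (7/6) (4/3) (5/3) (s^3)"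
    using sumi[of 2] unfolding bt2 hyp_Tm by (rule suminf_cmult')
  finally have J: "J = (1/3) * Gamma (1/6) * hyp2F2 (1/6) (1/2) (1/3) (2/3) (s^3)
     + s * Gamma (5/6) * hyp2F2 (1/2) (5/6) (2/3) (4/3) (s^3)
     + -(s^2 * sqrt pi / 4) * hyp2F2 (5/6) (7/6) (4/3) (5/3) (s^3)" .
  have "(LBINT x. exp (- (x ^ 6 - \<tau> * x ^ 4 + (1/3) * \<tau>\<^sup>2 * x\<^sup>2))) = exp (-(s^3)) * J"
    unfolding integrand_eq J_def s_def by (rule integral_mult_right_zero)
  also have "\<dots> = ((1/3) * Gamma (1/6) * hyp2F2 (1/6) (1/2) (1/3) (2/3) (\<tau> ^ 3 / 27)
     + (1/3) * \<tau> * Gamma (5/6) * hyp2F2 (1/2) (5/6) (2/3) (4/3) (\<tau> ^ 3 / 27)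
     - \<tau>\<^sup>2 * sqrt pi / 36 * hyp2F2 (5/6) (7/6) (4/3) (5/3) (\<tau> ^ 3 / 27))
    * exp (- (\<tau> ^ 3 / 27))"
    unfolding J z by (simp add: tau power2_eq_square algebra_simps)
  finally show ?thesis .
qed

end
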